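(* Let $n\ge 2$ and $q>0$ be real. For all $A,B\in M_n(\mathbb{C})$ such that at least one of $A$ and $B$ is normal, $$\|AB-qBA\|_F^2\le (1+q^2)\,\|A\|_F^2\,\|B\|_F^2 ,$$ and the constant $1+q^2$ cannot be replaced by any smaller constant (the bound is attained).
   Context: $\|X\|_F=\sqrt{\operatorname{tr}(XX^\dagger)}$ denotes the Frobenius norm. *)

theory Defs
  imports "HOL-Analysis.Analysis"
begin

definition cnj_transpose :: "complex^'n^'m \<Rightarrow> complex^'m^'n" where
  "cnj_transpose A = (\<chi> i j. cnj (A $ j $ i))"

definition normal_matrix :: "complex^'n^'n \<Rightarrow> bool" where
  "normal_matrix A \<longleftrightarrow> A ** cnj_transpose A = cnj_transpose A ** A"

text \<open>Frobenius norm sqrt(tr(X X^dagger)); the trace is real and nonnegative,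
  so we take its real part.\<close>
definition frob_norm :: "complex^'n^'n \<Rightarrow> real" where
  "frob_norm X = sqrt (Re (trace (X ** cnj_transpose X)))"

end

theory Submission
  imports Defs Jordan_Normal_Form.Spectral_Radius Jordan_Normal_Form.Schur_Decomposition
begin


lemma mult_entry:
  assumes "A \<in> carrier_mat n k" "B \<in> carrier_mat k m" "i < n" "j < m"
  shows "(A * B) $$ (i,j) = (\<Sum>l<k. A $$ (i,l) * B $$ (l,j))"
  using assms by (auto simp: scalar_prod_def lessThan_atLeast0 intro!: sum.cong)

definition adj :: "complex mat \<Rightarrow> complex mat" where
  "adj A = mat (dim_col A) (dim_row A) (\<lambda>(i,j). cnj (A $$ (j,i)))"

lemma adj_carrier[simp]: "A \<in> carrier_mat n m \<Longrightarrow> adj A \<in> carrier_mat m n"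
  by (auto simp: adj_def)
lemma adj_dims[simp]: "dim_row (adj A) = dim_col A" "dim_col (adj A) = dim_row A"
  by (auto simp: adj_def)
lemma adj_index[simp]: "i < dim_col A \<Longrightarrow> j < dim_row A \<Longrightarrow> adj A $$ (i,j) = cnj (A $$ (j,i))"
  by (auto simp: adj_def)

lemma adj_adj[simp]: "adj (adj A) = A"
  by (rule eq_matI) auto

lemma adj_mult:
  assumes "A \<in> carrier_mat n k" "B \<in> carrier_mat k m"
  shows "adj (A * B) = adj B * adj A"
proof (rule eq_matI)
  fix i j assume ij: "i < dim_row (adj B * adj A)" "j < dim_col (adj B * adj A)"
  hence i: "i < m" and j: "j < n" using assms by auto
  have e1: "(A * B) $$ (j,i) = (\<Sum>l<k. A $$ (j,l) * B $$ (l,i))"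
    by (rule mult_entry[OF assms j i])
  have e2: "(adj B * adj A) $$ (i,j) = (\<Sum>l<k. adj B $$ (i,l) * adj A $$ (l,j))"
    by (rule mult_entry) (use assms i j in auto)
  have "adj (A * B) $$ (i,j) = cnj ((A * B) $$ (j,i))"
    using assms i j by simp
  also have "\<dots> = (\<Sum>l<k. adj B $$ (i,l) * adj A $$ (l,j))"
    unfolding e1 using assms i j by (simp add: cnj_sum mult.commute)
  finally show "adj (A * B) $$ (i,j) = (adj B * adj A) $$ (i,j)" unfolding e2 .
qed (use assms in auto)

lemma adj_one[simp]: "adj (1\<^sub>m n) = 1\<^sub>m n"
  by (rule eq_matI) auto

definition blk :: "complex \<Rightarrow> complex mat \<Rightarrow> complex mat" where
  "blk a X = mat (Suc (dim_row X)) (Suc (dim_col X))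
     (\<lambda>(i,j). if i = 0 then (if j = 0 then a else 0) else if j = 0 then 0 else X $$ (i - 1, j - 1))"

lemma blk_carrier[simp]: "X \<in> carrier_mat m m \<Longrightarrow> blk a X \<in> carrier_mat (Suc m) (Suc m)"
  by (auto simp: blk_def)
lemma blk_dims[simp]: "dim_row (blk a X) = Suc (dim_row X)" "dim_col (blk a X) = Suc (dim_col X)"
  by (auto simp: blk_def)
lemma blk_index: "i < Suc (dim_row X) \<Longrightarrow> j < Suc (dim_col X) \<Longrightarrow> blk a X $$ (i,j) =
   (if i = 0 then (if j = 0 then a else 0) else if j = 0 then 0 else X $$ (i - 1, j - 1))"
  by (auto simp: blk_def)

lemma blk_mult:
  assumes X: "X \<in> carrier_mat m m" and Y: "Y \<in> carrier_mat m m"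
  shows "blk a X * blk b Y = blk (a * b) (X * Y)"
proof (rule eq_matI)
  fix i j assume "i < dim_row (blk (a * b) (X * Y))" "j < dim_col (blk (a * b) (X * Y))"
  hence i: "i < Suc m" and j: "j < Suc m" using X Y by auto
  have "(blk a X * blk b Y) $$ (i,j) = (\<Sum>l<Suc m. blk a X $$ (i,l) * blk b Y $$ (l,j))"
    using X Y i j by (intro mult_entry) auto
  also have "\<dots> = blk a X $$ (i,0) * blk b Y $$ (0,j) + (\<Sum>l<m. blk a X $$ (i,Suc l) * blk b Y $$ (Suc l,j))"
    by (rule sum.lessThan_Suc_shift)
  also have "\<dots> = blk (a * b) (X * Y) $$ (i,j)"
  proof (cases i)
    case 0
    thus ?thesis using X Y i j by (cases j) (auto simp: blk_index)
  next
    case (Suc i')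
    show ?thesis
    proof (cases j)
      case 0 thus ?thesis using X Y i j Suc by (auto simp: blk_index)
    next
      case (Suc j')
      have e: "(X * Y) $$ (i',j') = (\<Sum>l<m. X $$ (i',l) * Y $$ (l,j'))"
        by (rule mult_entry[OF X Y]) (use i j Suc \<open>i = Suc i'\<close> in auto)
      have "blk (a * b) (X * Y) $$ (i,j) = (X * Y) $$ (i',j')"
        using X Y i j Suc \<open>i = Suc i'\<close> by (simp add: blk_index)
      thus ?thesis unfolding e using X Y i j \<open>i = Suc i'\<close> Suc
        by (auto simp: blk_index)
    qed
  qed
  finally show "(blk a X * blk b Y) $$ (i,j) = blk (a * b) (X * Y) $$ (i,j)" .
qed (use X Y in auto)

lemma adj_blk: "adj (blk a X) = blk (cnj a) (adj X)"
  by (rule eq_matI) (auto simp: blk_index)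

lemma blk_one: "blk 1 (1\<^sub>m m) = 1\<^sub>m (Suc m)"
  by (rule eq_matI) (auto simp: blk_index)

lemma blk_inj:
  assumes "blk a X = blk b Y" "X \<in> carrier_mat m m" "Y \<in> carrier_mat m m"
  shows "X = Y"
proof (rule eq_matI)
  fix i j assume "i < dim_row Y" "j < dim_col Y"
  hence i: "i < m" and j: "j < m" using assms by auto
  have "blk a X $$ (Suc i, Suc j) = blk b Y $$ (Suc i, Suc j)" using assms by simp
  thus "X $$ (i,j) = Y $$ (i,j)" using assms(2,3) i j by (auto simp: blk_index)
qed (use assms in auto)



lemma assoc_dim:
  assumes "dim_col A = dim_row B" "dim_col B = dim_row C"
  shows "A * B * C = A * (B * C)"
proof -
  have a: "A \<in> carrier_mat (dim_row A) (dim_col A)" by (rule carrier_matI) auto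
  have b: "B \<in> carrier_mat (dim_col A) (dim_col B)" by (rule carrier_matI) (use assms in auto)
  have c: "C \<in> carrier_mat (dim_col B) (dim_col C)" by (rule carrier_matI) (use assms in auto)
  show ?thesis by (rule assoc_mult_mat[OF a b c])
qed

lemma unit_cancel:
  assumes W: "W \<in> carrier_mat n n" and WW: "W * adj W = 1\<^sub>m n" and Z: "Z \<in> carrier_mat n k"
  shows "W * (adj W * Z) = Z"
proof -
  have "W * (adj W * Z) = (W * adj W) * Z"
    using assoc_mult_mat[OF W adj_carrier[OF W] Z] by simp
  thus ?thesis using WW Z by simp
qed

lemma orthonormal_basis_exists:
  fixes v :: "complex vec"
  assumes v: "v \<in> carrier_vec n" and v0: "v \<noteq> 0\<^sub>v n"
  shows "\<exists>W c. W \<in> carrier_mat n n \<and> adj W * W = 1\<^sub>m n \<and> (\<forall>k<n. W $$ (k,0) = c * v $ k)"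
proof -
  interpret cof_vec_space n "TYPE(complex)" .
  define b where "b = basis_completion v"
  define ws where "ws = gram_schmidt n b"
  from basis_completion[OF v v0, folded b_def]
  have dist_b: "distinct b" and indep: "\<not> lin_dep (set b)" and b: "set b \<subseteq> carrier_vec n"
    and hdb: "hd b = v" and len_b: "length b = n" by auto
  have n: "n \<noteq> 0"
  proof
    assume "n = 0"
    hence "v = 0\<^sub>v n" using v by (intro eq_vecI) auto
    thus False using v0 by simp
  qed
  from hdb len_b n obtain vs where bv: "b = v # vs" by (cases b, auto)
  from gram_schmidt_result[OF b dist_b indep refl, folded ws_def]
  have ws: "set ws \<subseteq> carrier_vec n" "corthogonal ws" "length ws = n"
    by (auto simp: len_b)
  from gram_schmidt_hd[OF v, of vs, folded bv] have hdws: "hd ws = v" unfolding ws_def .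
  have ws0: "ws ! 0 = v" using hdws ws(3) n by (metis hd_conv_nth list.size(3))
  define s where "s = (\<lambda>i j. (\<Sum>k<n. cnj (ws!i $ k) * ws!j $ k))"
  have s_cs: "s i j = ws!j \<bullet>c ws!i" if "i < n" "j < n" for i j
  proof -
    have c: "ws!i \<in> carrier_vec n" "ws!j \<in> carrier_vec n" using ws that by auto
    show ?thesis unfolding s_def scalar_prod_def using c
      by (auto simp: lessThan_atLeast0 mult.commute intro!: sum.cong)
  qed
  define r where "r = (\<lambda>i. (\<Sum>k<n. (cmod (ws!i $ k))\<^sup>2))"
  have s_r: "s i i = complex_of_real (r i)" for i
    unfolding s_def r_def of_real_sum
    by (intro sum.cong refl) (metis complex_norm_square mult.commute)
  have s0: "s i j = 0" if "i < n" "j < n" "i \<noteq> j" for i j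
    using corthogonalD[OF ws(2), of j i] that ws(3) s_cs by auto
  have rpos: "r i > 0" if "i < n" for i
  proof -
    have "s i i \<noteq> 0" using corthogonalD[OF ws(2), of i i] that ws(3) s_cs by auto
    hence "r i \<noteq> 0" using s_r by auto
    moreover have "r i \<ge> 0" unfolding r_def by (intro sum_nonneg) auto
    ultimately show ?thesis by simp
  qed
  define c where "c = (\<lambda>i. complex_of_real (1 / sqrt (r i)))"
  define W where "W = mat n n (\<lambda>(k,j). c j * ws!j $ k)"
  have W: "W \<in> carrier_mat n n" unfolding W_def by simp
  have "adj W * W = 1\<^sub>m n"
  proof (rule eq_matI)
    fix i j assume "i < dim_row (1\<^sub>m n)" "j < dim_col (1\<^sub>m n)"
    hence i: "i < n" and j: "j < n" by auto
    have "(adj W * W) $$ (i,j) = (\<Sum>k<n. adj W $$ (i,k) * W $$ (k,j))"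
      by (rule mult_entry) (use W i j in auto)
    also have "\<dots> = (\<Sum>k<n. cnj (c i) * c j * (cnj (ws!i $ k) * ws!j $ k))"
      using W i j by (intro sum.cong refl) (auto simp: W_def)
    also have "\<dots> = cnj (c i) * c j * s i j" unfolding s_def by (simp add: sum_distrib_left)
    also have "\<dots> = 1\<^sub>m n $$ (i,j)"
    proof (cases "i = j")
      case True
      have "cnj (c i) * c i * complex_of_real (r i) = complex_of_real ((1 / sqrt (r i)) * (1 / sqrt (r i)) * r i)"
        unfolding c_def by (simp only: complex_cnj_complex_of_real of_real_mult[symmetric])
      also have "(1 / sqrt (r i)) * (1 / sqrt (r i)) * r i = 1"
        using rpos[OF i] by (simp add: field_simps)
      finally show ?thesis using True i s_r by simp
    qed (use i j s0 in auto)
    finally show "(adj W * W) $$ (i,j) = 1\<^sub>m n $$ (i,j)" .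
  qed (use W in auto)
  moreover have "\<forall>k<n. W $$ (k,0) = c 0 * v $ k"
    using n by (auto simp: W_def ws0)
  ultimately show ?thesis using W by blast
qed



lemma mcnj: "z * cnj z = (complex_of_real (cmod z))\<^sup>2"
  by (metis complex_norm_square of_real_power)
lemma mcnj': "cnj z * z = (complex_of_real (cmod z))\<^sup>2"
  by (metis complex_norm_square of_real_power mult.commute)

lemma normal_conj:
  assumes A: "A \<in> carrier_mat n n" and W: "W \<in> carrier_mat n n"
    and WW: "W * adj W = 1\<^sub>m n" and nA: "A * adj A = adj A * A"
  shows "(adj W * A * W) * adj (adj W * A * W) = adj (adj W * A * W) * (adj W * A * W)"
proof -
  have aW: "adj W \<in> carrier_mat n n" using W by simp
  have aA: "adj A \<in> carrier_mat n n" using A by simp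
  have awA: "adj W * A \<in> carrier_mat n n" by (rule mult_carrier_mat[OF aW A])
  have "adj (adj W * A * W) = adj W * (adj A * W)"
    using adj_mult[OF awA W] adj_mult[OF aW A] by simp
  hence adjA': "adj (adj W * A * W) = adj W * adj A * W"
    by (simp only: assoc_dim adj_dims index_mult_mat(2,3) carrier_matD[OF A] carrier_matD[OF W])
  have "(adj W * A * W) * (adj W * adj A * W) = adj W * (A * (W * (adj W * (adj A * W))))"
    by (simp only: assoc_dim adj_dims index_mult_mat(2,3) carrier_matD[OF A] carrier_matD[OF W])
  also have "\<dots> = adj W * (A * adj A) * W"
    using unit_cancel[OF W WW mult_carrier_mat[OF aA W]] by (simp only: assoc_dim adj_dims index_mult_mat(2,3) carrier_matD[OF A] carrier_matD[OF W])
  also have "\<dots> = adj W * (adj A * A) * W" using nA by simp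
  also have "\<dots> = adj W * (adj A * (W * (adj W * (A * W))))"
    using unit_cancel[OF W WW mult_carrier_mat[OF A W]] by (simp only: assoc_dim adj_dims index_mult_mat(2,3) carrier_matD[OF A] carrier_matD[OF W])
  also have "\<dots> = (adj W * adj A * W) * (adj W * A * W)"
    by (simp only: assoc_dim adj_dims index_mult_mat(2,3) carrier_matD[OF A] carrier_matD[OF W])
  finally show ?thesis unfolding adjA' .
qed

lemma spectral_mat:
  "A \<in> carrier_mat n n \<Longrightarrow> A * adj A = adj A * A \<Longrightarrow>
   \<exists>U D. U \<in> carrier_mat n n \<and> D \<in> carrier_mat n n \<and> adj U * U = 1\<^sub>m n \<and> U * adj U = 1\<^sub>m n \<and>
     (\<forall>i<n. \<forall>j<n. i \<noteq> j \<longrightarrow> D $$ (i,j) = 0) \<and> A = U * D * adj U"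
proof (induction n arbitrary: A)
  case 0
  show ?case
    by (rule exI[of _ "1\<^sub>m 0"], rule exI[of _ "1\<^sub>m 0"]) (use 0 in \<open>auto intro!: eq_matI\<close>)
next
  case (Suc m)
  define n where "n = Suc m"
  have A: "A \<in> carrier_mat n n" using Suc.prems n_def by simp
  have nA: "A * adj A = adj A * A" using Suc.prems by simp
  obtain e where "e \<in> spectrum A" using spectrum_non_empty[OF A] n_def by auto
  hence ev: "eigenvalue A e" unfolding spectrum_def by simp
  define v where "v = find_eigenvector A e"
  from find_eigenvector[OF A ev] have "eigenvector A v e" unfolding v_def .
  hence v: "v \<in> carrier_vec n" and v0: "v \<noteq> 0\<^sub>v n" and Av: "A *\<^sub>v v = e \<cdot>\<^sub>v v"
    unfolding eigenvector_def using A by auto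
  obtain W c where W: "W \<in> carrier_mat n n" and WW1: "adj W * W = 1\<^sub>m n"
    and Wc: "\<forall>k<n. W $$ (k,0) = c * v $ k"
    using orthonormal_basis_exists[OF v v0] by blast
  have aW: "adj W \<in> carrier_mat n n" using W by simp
  have WW2: "W * adj W = 1\<^sub>m n" using mat_mult_left_right_inverse[OF aW W WW1] .
  define A' where "A' = adj W * A * W"
  have A': "A' \<in> carrier_mat n n" unfolding A'_def
    by (rule mult_carrier_mat[OF mult_carrier_mat[OF aW A] W])
  have nA': "A' * adj A' = adj A' * A'" unfolding A'_def by (rule normal_conj[OF A W WW2 nA])
  have AW0: "(A * W) $$ (k,0) = e * W $$ (k,0)" if k: "k < n" for k
  proof -
    have "(A * W) $$ (k,0) = (\<Sum>l<n. A $$ (k,l) * W $$ (l,0))"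
      by (rule mult_entry[OF A W k]) (simp add: n_def)
    also have "\<dots> = c * (\<Sum>l<n. A $$ (k,l) * v $ l)"
      using Wc by (simp add: sum_distrib_left algebra_simps)
    also have "(\<Sum>l<n. A $$ (k,l) * v $ l) = (A *\<^sub>v v) $ k"
      using A v k by (auto simp: scalar_prod_def lessThan_atLeast0 intro!: sum.cong)
    also have "\<dots> = e * v $ k" using Av v k by simp
    finally show ?thesis using Wc k by simp
  qed
  have col0: "A' $$ (i,0) = (if i = 0 then e else 0)" if i: "i < n" for i
  proof -
    have "A' = adj W * (A * W)" unfolding A'_def by (rule assoc_dim) (use A W in auto)
    hence "A' $$ (i,0) = (adj W * (A * W)) $$ (i,0)" by simp
    also have "\<dots> = (\<Sum>k<n. adj W $$ (i,k) * (A * W) $$ (k,0))"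
      by (rule mult_entry[OF aW mult_carrier_mat[OF A W] i]) (simp add: n_def)
    also have "\<dots> = e * (\<Sum>k<n. adj W $$ (i,k) * W $$ (k,0))"
      using AW0 by (simp add: sum_distrib_left algebra_simps)
    also have "(\<Sum>k<n. adj W $$ (i,k) * W $$ (k,0)) = (adj W * W) $$ (i,0)"
      using mult_entry[OF aW W i, of 0] by (simp add: n_def)
    finally show ?thesis using WW1 i by (simp add: n_def)
  qed
  have rowsum: "(\<Sum>k<n. (cmod (A' $$ (0,k)))\<^sup>2) = (cmod e)\<^sup>2"
  proof -
    have aA': "adj A' \<in> carrier_mat n n" using A' by simp
    have "(A' * adj A') $$ (0,0) = (\<Sum>k<n. A' $$ (0,k) * adj A' $$ (k,0))"
      by (rule mult_entry[OF A' aA']) (auto simp: n_def)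
    also have "\<dots> = complex_of_real (\<Sum>k<n. (cmod (A' $$ (0,k)))\<^sup>2)"
      unfolding of_real_sum using A' by (intro sum.cong refl) (auto simp: n_def mcnj)
    finally have 1: "(A' * adj A') $$ (0,0) = complex_of_real (\<Sum>k<n. (cmod (A' $$ (0,k)))\<^sup>2)" .
    have "(adj A' * A') $$ (0,0) = (\<Sum>k<n. adj A' $$ (0,k) * A' $$ (k,0))"
      by (rule mult_entry[OF aA' A']) (auto simp: n_def)
    also have "\<dots> = (\<Sum>k<n. if k = 0 then cnj e * e else 0)"
      using A' col0 by (intro sum.cong refl) (auto simp: n_def)
    also have "\<dots> = complex_of_real ((cmod e)\<^sup>2)"
      by (simp add: n_def mcnj')
    finally have 2: "(adj A' * A') $$ (0,0) = complex_of_real ((cmod e)\<^sup>2)" .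
    have "complex_of_real (\<Sum>k<n. (cmod (A' $$ (0,k)))\<^sup>2) = complex_of_real ((cmod e)\<^sup>2)"
      using 1 2 nA' by metis
    thus ?thesis by (simp only: of_real_eq_iff)
  qed
  have row0: "A' $$ (0, Suc k) = 0" if k: "k < m" for k
  proof -
    have "(\<Sum>k<n. (cmod (A' $$ (0,k)))\<^sup>2) = (cmod (A' $$ (0,0)))\<^sup>2 + (\<Sum>k<m. (cmod (A' $$ (0,Suc k)))\<^sup>2)"
      unfolding n_def by (rule sum.lessThan_Suc_shift)
    hence z: "(\<Sum>k<m. (cmod (A' $$ (0,Suc k)))\<^sup>2) = 0"
      using rowsum col0[of 0] by (simp add: n_def)
    have "(cmod (A' $$ (0,Suc k)))\<^sup>2 = 0"
      using sum_nonneg_eq_0_iff[of "{..<m}" "\<lambda>k. (cmod (A' $$ (0,Suc k)))\<^sup>2"] z k by auto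
    thus ?thesis by simp
  qed
  define A3 where "A3 = mat m m (\<lambda>(i,j). A' $$ (Suc i, Suc j))"
  have A3: "A3 \<in> carrier_mat m m" unfolding A3_def by simp
  have A'blk: "A' = blk e A3"
  proof (rule eq_matI)
    fix i j assume "i < dim_row (blk e A3)" "j < dim_col (blk e A3)"
    hence i: "i < Suc m" and j: "j < Suc m" using A3 by auto
    show "A' $$ (i,j) = blk e A3 $$ (i,j)"
    proof (cases i)
      case 0 thus ?thesis using i j A3 col0[of 0] row0 by (cases j) (auto simp: blk_index n_def)
    next
      case (Suc i') thus ?thesis using i j A3 col0[of i] by (cases j) (auto simp: blk_index n_def A3_def)
    qed
  qed (use A' A3 n_def in auto)
  have nA3: "A3 * adj A3 = adj A3 * A3"
  proof -
    have aA3: "adj A3 \<in> carrier_mat m m" using A3 by simp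
    have "blk (e * cnj e) (A3 * adj A3) = blk (cnj e * e) (adj A3 * A3)"
      using nA' unfolding A'blk adj_blk blk_mult[OF A3 aA3] blk_mult[OF aA3 A3] .
    thus ?thesis by (rule blk_inj) (use A3 in auto)
  qed
  obtain V D3 where V: "V \<in> carrier_mat m m" and D3: "D3 \<in> carrier_mat m m"
    and VV1: "adj V * V = 1\<^sub>m m" and VV2: "V * adj V = 1\<^sub>m m"
    and D3d: "\<forall>i<m. \<forall>j<m. i \<noteq> j \<longrightarrow> D3 $$ (i,j) = 0" and A3eq: "A3 = V * D3 * adj V"
    using Suc.IH[OF A3 nA3] by blast
  have aV: "adj V \<in> carrier_mat m m" using V by simp
  define U where "U = W * blk 1 V"
  define D where "D = blk e D3"
  have bV: "blk 1 V \<in> carrier_mat n n" using V n_def by simp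
  have U: "U \<in> carrier_mat n n" unfolding U_def using W bV by simp
  have bD: "blk e D3 \<in> carrier_mat n n" using D3 n_def by simp
  have D: "D \<in> carrier_mat n n" unfolding D_def by (rule bD)
  have adjU: "adj U = blk 1 (adj V) * adj W"
    unfolding U_def using adj_mult[OF W bV] by (simp add: adj_blk)
  have bVa: "blk 1 (adj V) \<in> carrier_mat n n" using aV n_def by simp
  have "adj U * U = blk 1 (adj V) * ((adj W * W) * blk 1 V)"
    unfolding adjU unfolding U_def by (simp only: assoc_dim adj_dims index_mult_mat(2,3) carrier_matD[OF W] carrier_matD[OF bV] carrier_matD[OF bVa] carrier_matD[OF A] carrier_matD[OF bD])
  also have "\<dots> = blk 1 (adj V * V)" using WW1 left_mult_one_mat[OF bV] blk_mult[OF aV V] by simp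
  also have "\<dots> = 1\<^sub>m n" using VV1 blk_one n_def by simp
  finally have U1: "adj U * U = 1\<^sub>m n" .
  have "U * adj U = W * ((blk 1 V * blk 1 (adj V)) * adj W)"
    unfolding adjU unfolding U_def by (simp only: assoc_dim adj_dims index_mult_mat(2,3) carrier_matD[OF W] carrier_matD[OF bV] carrier_matD[OF bVa] carrier_matD[OF A] carrier_matD[OF bD])
  also have "blk 1 V * blk 1 (adj V) = 1\<^sub>m n" using blk_mult[OF V aV] VV2 blk_one n_def by simp
  finally have U2: "U * adj U = 1\<^sub>m n" using WW2 left_mult_one_mat[OF aW] by simp
  have Ddiag: "\<forall>i<n. \<forall>j<n. i \<noteq> j \<longrightarrow> D $$ (i,j) = 0"
  proof (intro allI impI)
    fix i j assume ij: "i < n" "j < n" "i \<noteq> j"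
    show "D $$ (i,j) = 0"
      using ij D3 D3d unfolding D_def n_def
      by (cases i; cases j) (auto simp: blk_index)
  qed
  have "U * D * adj U = W * ((blk 1 V * blk e D3) * blk 1 (adj V)) * adj W"
    unfolding adjU unfolding U_def D_def by (simp only: assoc_dim adj_dims index_mult_mat(2,3) carrier_matD[OF W] carrier_matD[OF bV] carrier_matD[OF bVa] carrier_matD[OF A] carrier_matD[OF bD])
  also have "(blk 1 V * blk e D3) * blk 1 (adj V) = blk e (V * D3 * adj V)"
    using blk_mult[OF V D3] blk_mult[OF _ aV, of "V * D3"] V D3 by simp
  also have "\<dots> = A'" using A3eq A'blk by simp
  also have "W * A' * adj W = A"
  proof -
    have "W * A' * adj W = (W * adj W) * A * (W * adj W)"
      unfolding A'_def by (simp only: assoc_dim adj_dims index_mult_mat(2,3) carrier_matD[OF W] carrier_matD[OF bV] carrier_matD[OF bVa] carrier_matD[OF A] carrier_matD[OF bD])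
    thus ?thesis using WW2 A by simp
  qed
  finally have "A = U * D * adj U" ..
  show ?case using U D U1 U2 Ddiag \<open>A = U * D * adj U\<close> unfolding n_def by blast
qed



locale bijn =
  fixes h :: "'n::finite \<Rightarrow> nat"
  assumes bij: "bij_betw h (UNIV::'n set) {0..<CARD('n)}"
begin

definition g :: "nat \<Rightarrow> 'n" where "g = inv_into UNIV h"

lemma inj_h: "inj h" using bij by (simp add: bij_betw_def)
lemma h_lt: "h i < CARD('n)" using bij by (auto simp: bij_betw_def)
lemma g_h[simp]: "g (h i) = i" unfolding g_def using inj_h by simp
lemma h_g[simp]: "k < CARD('n) \<Longrightarrow> h (g k) = k"
  unfolding g_def using bij by (auto simp: bij_betw_def intro: f_inv_into_f)
lemma h_eq[simp]: "h i = h j \<longleftrightarrow> i = j" using inj_h by (auto dest: injD)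

definition to_m :: "complex^'n^'n \<Rightarrow> complex mat" where
  "to_m A = Matrix.mat CARD('n) CARD('n) (\<lambda>(i,j). A $ g i $ g j)"
definition of_m :: "complex mat \<Rightarrow> complex^'n^'n" where
  "of_m M = (\<chi> i j. M $$ (h i, h j))"

lemma to_m_carrier: "to_m A \<in> carrier_mat CARD('n) CARD('n)"
  by (simp add: to_m_def)

lemma of_to[simp]: "of_m (to_m A) = A"
  by (simp add: of_m_def to_m_def Finite_Cartesian_Product.vec_eq_iff h_lt)

lemma of_m_inj:
  assumes "M \<in> carrier_mat CARD('n) CARD('n)" "M' \<in> carrier_mat CARD('n) CARD('n)" "of_m M = of_m M'"
  shows "M = M'"
proof (rule eq_matI)
  fix i j assume "i < dim_row M'" "j < dim_col M'"
  hence i: "i < CARD('n)" and j: "j < CARD('n)" using assms by auto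
  have "of_m M $ g i $ g j = of_m M' $ g i $ g j" using assms by simp
  thus "M $$ (i,j) = M' $$ (i,j)" using i j by (simp add: of_m_def)
qed (use assms in auto)

lemma of_m_mult:
  assumes M: "M \<in> carrier_mat CARD('n) CARD('n)" and M': "M' \<in> carrier_mat CARD('n) CARD('n)"
  shows "of_m (M * M') = of_m M ** of_m M'"
proof -
  have "(M * M') $$ (h i, h j) = (\<Sum>k\<in>UNIV. M $$ (h i, h k) * M' $$ (h k, h j))" for i j
  proof -
    have "(M * M') $$ (h i, h j) = (\<Sum>l<CARD('n). M $$ (h i, l) * M' $$ (l, h j))"
      by (rule mult_entry[OF M M' h_lt h_lt])
    also have "\<dots> = (\<Sum>k\<in>UNIV. M $$ (h i, h k) * M' $$ (h k, h j))"
      using sum.reindex_bij_betw[OF bij, of "\<lambda>l. M $$ (h i, l) * M' $$ (l, h j)"]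
      by (simp add: lessThan_atLeast0)
    finally show ?thesis .
  qed
  thus ?thesis by (simp add: of_m_def matrix_matrix_mult_def Finite_Cartesian_Product.vec_eq_iff)
qed

lemma of_m_adj:
  assumes M: "M \<in> carrier_mat CARD('n) CARD('n)"
  shows "of_m (adj M) = cnj_transpose (of_m M)"
  using M by (simp add: of_m_def cnj_transpose_def Finite_Cartesian_Product.vec_eq_iff h_lt)

lemma of_m_one: "of_m (1\<^sub>m CARD('n)) = Finite_Cartesian_Product.mat 1"
  by (simp add: of_m_def Finite_Cartesian_Product.mat_def Finite_Cartesian_Product.vec_eq_iff h_lt)

lemma spectral_vec_b:
  fixes A :: "complex^'n^'n"
  assumes "normal_matrix A"
  shows "\<exists>U D :: complex^'n^'n. cnj_transpose U ** U = Finite_Cartesian_Product.mat 1 \<and>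
      U ** cnj_transpose U = Finite_Cartesian_Product.mat 1 \<and>
      (\<forall>i j. i \<noteq> j \<longrightarrow> D$i$j = 0) \<and> A = U ** D ** cnj_transpose U"
proof -
  let ?N = "CARD('n)"
  define M where "M = to_m A"
  have M: "M \<in> carrier_mat ?N ?N" unfolding M_def by (rule to_m_carrier)
  have aM: "adj M \<in> carrier_mat ?N ?N" using M by simp
  have "of_m (M * adj M) = of_m M ** cnj_transpose (of_m M)"
    using of_m_mult[OF M aM] of_m_adj[OF M] by simp
  also have "\<dots> = cnj_transpose (of_m M) ** of_m M"
    using assms by (simp add: M_def normal_matrix_def)
  also have "\<dots> = of_m (adj M * M)"
    using of_m_mult[OF aM M] of_m_adj[OF M] by simp
  finally have "of_m (M * adj M) = of_m (adj M * M)" .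
  hence nM: "M * adj M = adj M * M"
    by (rule of_m_inj[rotated 2]) (use M aM in auto)
  obtain U D where U: "U \<in> carrier_mat ?N ?N" and D: "D \<in> carrier_mat ?N ?N"
    and U1: "adj U * U = 1\<^sub>m ?N" and U2: "U * adj U = 1\<^sub>m ?N"
    and Dd: "\<forall>i<?N. \<forall>j<?N. i \<noteq> j \<longrightarrow> D $$ (i,j) = 0" and MU: "M = U * D * adj U"
    using spectral_mat[OF M nM] by blast
  have aU: "adj U \<in> carrier_mat ?N ?N" using U by simp
  have c1: "cnj_transpose (of_m U) ** of_m U = Finite_Cartesian_Product.mat 1"
    using of_m_mult[OF aU U] of_m_adj[OF U] U1 of_m_one by simp
  have c2: "of_m U ** cnj_transpose (of_m U) = Finite_Cartesian_Product.mat 1"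
    using of_m_mult[OF U aU] of_m_adj[OF U] U2 of_m_one by simp
  have c3: "\<forall>i j. i \<noteq> j \<longrightarrow> of_m D $ i $ j = 0"
    using Dd h_lt by (simp add: of_m_def)
  have "A = of_m M" unfolding M_def by simp
  also have "\<dots> = of_m U ** of_m D ** cnj_transpose (of_m U)"
    unfolding MU of_m_mult[OF mult_carrier_mat[OF U D] aU] of_m_mult[OF U D] of_m_adj[OF U] ..
  finally show ?thesis using c1 c2 c3 by blast
qed

end

lemma spectral_vec:
  fixes A :: "complex^'n^'n"
  assumes "normal_matrix A"
  shows "\<exists>U D :: complex^'n^'n. cnj_transpose U ** U = Finite_Cartesian_Product.mat 1 \<and>
      U ** cnj_transpose U = Finite_Cartesian_Product.mat 1 \<and>
      (\<forall>i j. i \<noteq> j \<longrightarrow> D$i$j = 0) \<and> A = U ** D ** cnj_transpose U"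
proof -
  obtain h :: "'n \<Rightarrow> nat" where "bij_betw h UNIV {0..<card (UNIV :: 'n set)}"
    using ex_bij_betw_finite_nat[of "UNIV :: 'n set"] by auto
  then interpret bijn h by unfold_locales
  show ?thesis by (rule spectral_vec_b[OF assms])
qed



definition fs :: "complex^'n^'n \<Rightarrow> real" where
  "fs X = (\<Sum>i\<in>UNIV. \<Sum>j\<in>UNIV. (cmod (X$i$j))\<^sup>2)"

lemma fs_nonneg: "fs X \<ge> 0"
  unfolding fs_def by (intro sum_nonneg) auto

lemma trace_fs: "trace (X ** cnj_transpose X) = complex_of_real (fs X)"
proof -
  have "trace (X ** cnj_transpose X) = (\<Sum>i\<in>UNIV. \<Sum>k\<in>UNIV. X$i$k * cnj (X$i$k))"
    by (simp add: trace_def matrix_matrix_mult_def cnj_transpose_def)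
  also have "\<dots> = (\<Sum>i\<in>UNIV. \<Sum>k\<in>UNIV. complex_of_real ((cmod (X$i$k))\<^sup>2))"
    by (intro sum.cong refl) (metis complex_norm_square)
  also have "\<dots> = complex_of_real (fs X)" by (simp add: fs_def)
  finally show ?thesis .
qed

lemma frob_sq: "(frob_norm X)\<^sup>2 = fs X"
  unfolding frob_norm_def trace_fs using fs_nonneg by simp

lemma cnj_transpose_mult: "cnj_transpose (A ** B) = cnj_transpose B ** cnj_transpose A"
  by (simp add: cnj_transpose_def matrix_matrix_mult_def Finite_Cartesian_Product.vec_eq_iff cnj_sum mult.commute)

lemma cnj_transpose_cnj_transpose[simp]: "cnj_transpose (cnj_transpose A) = A"
  by (simp add: cnj_transpose_def Finite_Cartesian_Product.vec_eq_iff)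

lemma fs_unitary:
  fixes U X :: "complex^'n^'n"
  assumes "cnj_transpose U ** U = Finite_Cartesian_Product.mat 1"
  shows "fs (U ** X ** cnj_transpose U) = fs X"
proof -
  have "trace ((U ** X ** cnj_transpose U) ** cnj_transpose (U ** X ** cnj_transpose U))
      = trace (U ** (X ** cnj_transpose X) ** cnj_transpose U)"
    by (simp add: cnj_transpose_mult matrix_mul_assoc)
       (metis assms matrix_mul_assoc matrix_mul_rid)
  also have "\<dots> = trace ((X ** cnj_transpose X) ** (cnj_transpose U ** U))"
    by (metis trace_mul_sym matrix_mul_assoc)
  also have "\<dots> = trace (X ** cnj_transpose X)" using assms by simp
  finally show ?thesis unfolding trace_fs by simp
qed

lemma diag_mult_left:
  fixes D Y :: "complex^'n^'n"
  assumes "\<forall>i j. i \<noteq> j \<longrightarrow> D$i$j = 0"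
  shows "(D ** Y)$i$j = D$i$i * Y$i$j"
proof -
  have "(D ** Y)$i$j = (\<Sum>k\<in>UNIV. D$i$k * Y$k$j)" by (simp add: matrix_matrix_mult_def)
  also have "\<dots> = (\<Sum>k\<in>UNIV. if k = i then D$i$k * Y$k$j else 0)"
    by (rule sum.cong) (auto simp: assms)
  finally show ?thesis by simp
qed

lemma diag_mult_right:
  fixes D Y :: "complex^'n^'n"
  assumes "\<forall>i j. i \<noteq> j \<longrightarrow> D$i$j = 0"
  shows "(Y ** D)$i$j = Y$i$j * D$j$j"
proof -
  have "(Y ** D)$i$j = (\<Sum>k\<in>UNIV. Y$i$k * D$k$j)" by (simp add: matrix_matrix_mult_def)
  also have "\<dots> = (\<Sum>k\<in>UNIV. if k = j then Y$i$k * D$k$j else 0)"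
    by (rule sum.cong) (auto simp: assms)
  finally show ?thesis by simp
qed

lemma real_aux1:
  fixes q x :: real assumes "q > 0" "x \<ge> 0"
  shows "\<bar>1 - q\<bar>\<^sup>2 * x \<le> (1 + q\<^sup>2) * x"
proof -
  have "\<bar>1 - q\<bar>\<^sup>2 = 1 - 2 * q + q\<^sup>2" by (simp add: power2_eq_square algebra_simps)
  also have "\<dots> \<le> 1 + q\<^sup>2" using assms by simp
  finally show ?thesis using assms(2) by (rule mult_right_mono)
qed

lemma real_aux2:
  fixes q a b :: real
  shows "(a + q * b)\<^sup>2 \<le> (1 + q\<^sup>2) * (a\<^sup>2 + b\<^sup>2)"
proof -
  have "0 \<le> (q * a - b)\<^sup>2" by simp
  moreover have "(1 + q\<^sup>2) * (a\<^sup>2 + b\<^sup>2) - (a + q * b)\<^sup>2 = (q * a - b)\<^sup>2"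
    by (simp add: power2_eq_square algebra_simps)
  ultimately show ?thesis by linarith
qed

lemma pointwise:
  fixes d :: "'n::finite \<Rightarrow> complex" and q :: real
  assumes q: "q > 0"
  shows "(cmod (d i - q * d j))\<^sup>2 \<le> (1 + q\<^sup>2) * (\<Sum>k\<in>UNIV. (cmod (d k))\<^sup>2)"
proof -
  have S: "(cmod (d k))\<^sup>2 \<le> (\<Sum>k\<in>UNIV. (cmod (d k))\<^sup>2)" for k
    by (rule member_le_sum) auto
  have pos: "0 \<le> 1 + q\<^sup>2" by (simp add: add_nonneg_nonneg)
  show ?thesis
  proof (cases "i = j")
    case True
    have e: "d i - q * d j = complex_of_real (1 - q) * d i" using True by (simp add: algebra_simps)
    have "cmod (d i - q * d j) = \<bar>1 - q\<bar> * cmod (d i)"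
      unfolding e norm_mult norm_of_real ..
    hence "(cmod (d i - q * d j))\<^sup>2 = \<bar>1 - q\<bar>\<^sup>2 * (cmod (d i))\<^sup>2" by (simp add: power_mult_distrib)
    also have "\<dots> \<le> (1 + q\<^sup>2) * (cmod (d i))\<^sup>2" by (rule real_aux1[OF q]) simp
    also have "\<dots> \<le> (1 + q\<^sup>2) * (\<Sum>k\<in>UNIV. (cmod (d k))\<^sup>2)" by (rule mult_left_mono[OF S pos])
    finally show ?thesis .
  next
    case False
    have "cmod (d i - q * d j) \<le> cmod (d i) + cmod (complex_of_real q * d j)"
      by (rule norm_triangle_ineq4)
    also have "cmod (complex_of_real q * d j) = q * cmod (d j)" using q by (simp add: norm_mult)
    finally have t: "cmod (d i - q * d j) \<le> cmod (d i) + q * cmod (d j)" .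
    have "(cmod (d i - q * d j))\<^sup>2 \<le> (cmod (d i) + q * cmod (d j))\<^sup>2"
      by (rule power_mono[OF t]) simp
    also have "\<dots> \<le> (1 + q\<^sup>2) * ((cmod (d i))\<^sup>2 + (cmod (d j))\<^sup>2)" by (rule real_aux2)
    also have "(cmod (d i))\<^sup>2 + (cmod (d j))\<^sup>2 = (\<Sum>k\<in>{i,j}. (cmod (d k))\<^sup>2)"
      using False by simp
    also have "\<dots> \<le> (\<Sum>k\<in>UNIV. (cmod (d k))\<^sup>2)"
      by (rule sum_mono2) auto
    finally show ?thesis using pos by (simp add: mult_left_mono)
  qed
qed

lemma diag_ineq:
  fixes D Y :: "complex^'n^'n" and q :: real
  assumes diag: "\<forall>i j. i \<noteq> j \<longrightarrow> D$i$j = 0" and q: "q > 0"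
  shows "fs (D ** Y - q *\<^sub>R (Y ** D)) \<le> (1 + q\<^sup>2) * fs D * fs Y"
proof -
  define S where "S = (\<Sum>k\<in>UNIV. (cmod (D$k$k))\<^sup>2)"
  have fsD: "fs D = S" unfolding fs_def S_def
  proof (intro sum.cong refl)
    fix x :: 'n
    have "(\<Sum>j\<in>UNIV. (cmod (D$x$j))\<^sup>2) = (\<Sum>j\<in>UNIV. if j = x then (cmod (D$x$x))\<^sup>2 else 0)"
      by (rule sum.cong) (auto simp: diag)
    thus "(\<Sum>j\<in>UNIV. (cmod (D$x$j))\<^sup>2) = (cmod (D$x$x))\<^sup>2" by simp
  qed
  have e: "(D ** Y - q *\<^sub>R (Y ** D))$i$j = (D$i$i - q * D$j$j) * Y$i$j" for i j
    by (simp add: diag_mult_left[OF diag] diag_mult_right[OF diag])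
       (simp add: scaleR_conv_of_real algebra_simps)
  have "fs (D ** Y - q *\<^sub>R (Y ** D)) = (\<Sum>i\<in>UNIV. \<Sum>j\<in>UNIV. (cmod (D$i$i - q * D$j$j))\<^sup>2 * (cmod (Y$i$j))\<^sup>2)"
    unfolding fs_def e by (simp add: norm_mult power_mult_distrib)
  also have "\<dots> \<le> (\<Sum>i\<in>UNIV. \<Sum>j\<in>UNIV. ((1 + q\<^sup>2) * S) * (cmod (Y$i$j))\<^sup>2)"
    unfolding S_def
    by (intro sum_mono mult_right_mono pointwise[OF q, of "\<lambda>k. D$k$k"]) auto
  also have "\<dots> = (1 + q\<^sup>2) * fs D * fs Y"
    unfolding fsD by (simp add: fs_def sum_distrib_left mult.assoc)
  finally show ?thesis .
qed



lemma mm_diff_l: "(A::complex^'n^'n) ** (B - C) = A ** B - A ** C"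
  by (simp add: matrix_matrix_mult_def Finite_Cartesian_Product.vec_eq_iff algebra_simps sum_subtractf)
lemma mm_diff_r: "((B::complex^'n^'n) - C) ** A = B ** A - C ** A"
  by (simp add: matrix_matrix_mult_def Finite_Cartesian_Product.vec_eq_iff algebra_simps sum_subtractf)
lemma mm_scale_l: "((c::real) *\<^sub>R (A::complex^'n^'n)) ** B = c *\<^sub>R (A ** B)"
  by (simp add: matrix_matrix_mult_def Finite_Cartesian_Product.vec_eq_iff scaleR_sum_right)
lemma mm_scale_r: "(A::complex^'n^'n) ** ((c::real) *\<^sub>R B) = c *\<^sub>R (A ** B)"
  by (simp add: matrix_matrix_mult_def Finite_Cartesian_Product.vec_eq_iff scaleR_sum_right)

lemma fs_scale: "fs ((c::real) *\<^sub>R (X::complex^'n^'n)) = c\<^sup>2 * fs X"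
  by (simp add: fs_def sum_distrib_left power_mult_distrib)
lemma fs_minus: "fs (- (X::complex^'n^'n)) = fs X"
  by (simp add: fs_def)

lemma normal_case:
  fixes A B :: "complex^'n^'n" and q :: real
  assumes "normal_matrix A" "q > 0"
  shows "fs (A ** B - q *\<^sub>R (B ** A)) \<le> (1 + q\<^sup>2) * fs A * fs B"
proof -
  obtain U D :: "complex^'n^'n" where u1: "cnj_transpose U ** U = Finite_Cartesian_Product.mat 1"
    and u2: "U ** cnj_transpose U = Finite_Cartesian_Product.mat 1"
    and diag: "\<forall>i j. i \<noteq> j \<longrightarrow> D$i$j = 0" and AD: "A = U ** D ** cnj_transpose U"
    using spectral_vec[OF assms(1)] by blast
  define Y where "Y = cnj_transpose U ** B ** U"
  have BY: "B = U ** Y ** cnj_transpose U"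
    unfolding Y_def by (simp add: matrix_mul_assoc u2) (metis matrix_mul_assoc matrix_mul_lid matrix_mul_rid u2)
  have "A ** B - q *\<^sub>R (B ** A) = U ** (D ** Y - q *\<^sub>R (Y ** D)) ** cnj_transpose U"
  proof -
    have 1: "A ** B = U ** (D ** Y) ** cnj_transpose U"
      unfolding AD BY by (metis matrix_mul_assoc matrix_mul_lid u1)
    have 2: "B ** A = U ** (Y ** D) ** cnj_transpose U"
      unfolding AD BY by (metis matrix_mul_assoc matrix_mul_lid u1)
    show ?thesis unfolding 1 2 by (simp add: mm_diff_l mm_diff_r mm_scale_l mm_scale_r)
  qed
  hence "fs (A ** B - q *\<^sub>R (B ** A)) = fs (D ** Y - q *\<^sub>R (Y ** D))"
    using fs_unitary[OF u1] by simp
  also have "\<dots> \<le> (1 + q\<^sup>2) * fs D * fs Y" by (rule diag_ineq[OF diag assms(2)])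
  also have "fs D = fs A" unfolding AD using fs_unitary[OF u1] by simp
  also have "fs Y = fs B" unfolding BY using fs_unitary[OF u1] by simp
  finally show ?thesis .
qed



lemma diag_normal:
  fixes D :: "complex^'n^'n"
  assumes diag: "\<forall>i j. i \<noteq> j \<longrightarrow> D$i$j = 0"
  shows "normal_matrix D"
proof -
  have diag': "\<forall>i j. i \<noteq> j \<longrightarrow> cnj_transpose D$i$j = 0"
    using diag by (simp add: cnj_transpose_def)
  show ?thesis unfolding normal_matrix_def Finite_Cartesian_Product.vec_eq_iff
    apply (auto simp: diag_mult_left[OF diag] diag_mult_right[OF diag]
        diag_mult_left[OF diag'] diag_mult_right[OF diag'] cnj_transpose_def diag mult.commute)
    using diag by metis
qed

lemma diag_entry:
  fixes D Y :: "complex^'n^'n" and q :: real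
  assumes diag: "\<forall>i j. i \<noteq> j \<longrightarrow> D$i$j = 0"
  shows "(D ** Y - q *\<^sub>R (Y ** D))$i$j = (D$i$i - q * D$j$j) * Y$i$j"
    by (simp add: diag_mult_left[OF diag] diag_mult_right[OF diag])
       (simp add: scaleR_conv_of_real algebra_simps)

lemma main_ineq:
  fixes A B :: "complex^'n^'n" and q :: real
  assumes "normal_matrix A \<or> normal_matrix B" "q > 0"
  shows "fs (A ** B - q *\<^sub>R (B ** A)) \<le> (1 + q\<^sup>2) * fs A * fs B"
  using assms(1)
proof
  assume "normal_matrix A" thus ?thesis using normal_case assms(2) by blast
next
  assume nB: "normal_matrix B"
  have q': "1/q > 0" using assms(2) by simp
  have eq: "A ** B - q *\<^sub>R (B ** A) = - (q *\<^sub>R (B ** A - (1/q) *\<^sub>R (A ** B)))"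
    using assms(2) by (simp add: algebra_simps)
  have "fs (A ** B - q *\<^sub>R (B ** A)) = q\<^sup>2 * fs (B ** A - (1/q) *\<^sub>R (A ** B))"
    unfolding eq fs_minus fs_scale ..
  also have "\<dots> \<le> q\<^sup>2 * ((1 + (1/q)\<^sup>2) * fs B * fs A)"
    by (intro mult_left_mono normal_case[OF nB q']) auto
  also have "\<dots> = (1 + q\<^sup>2) * fs A * fs B"
    using assms(2) by (simp add: field_simps power2_eq_square)
  finally show ?thesis .
qed

lemma two_elems:
  assumes "CARD('n::finite) \<ge> 2"
  obtains i0 j0 :: "'n::finite" where "i0 \<noteq> j0"
proof -
  have "\<exists>i0 j0 :: 'n. i0 \<noteq> j0"
  proof (rule ccontr)
    assume "\<not> ?thesis"
    hence "(UNIV :: 'n set) = {undefined}" by auto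
    hence "CARD('n) = 1" using card_1_singleton_iff by (metis One_nat_def)
    thus False using assms by simp
  qed
  thus ?thesis using that by blast
qed

lemma attain:
  fixes q :: real
  assumes "CARD('n::finite) \<ge> 2" and q: "q > 0"
  shows "\<exists>A B :: complex^'n^'n. (normal_matrix A \<or> normal_matrix B) \<and>
            A \<noteq> 0 \<and> B \<noteq> 0 \<and>
            (frob_norm (A ** B - q *\<^sub>R (B ** A)))\<^sup>2
              = (1 + q\<^sup>2) * (frob_norm A)\<^sup>2 * (frob_norm B)\<^sup>2"
proof -
  obtain i0 j0 :: 'n where ij: "i0 \<noteq> j0" using two_elems[OF assms(1)] by blast
  define a where "a = (\<lambda>i::'n. if i = i0 then 1 else if i = j0 then - complex_of_real q else 0)"
  define A :: "complex^'n^'n" where "A = (\<chi> i j. if i = j then a i else 0)"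
  define B :: "complex^'n^'n" where "B = (\<chi> i j. if i = i0 \<and> j = j0 then 1 else 0)"
  have diag: "\<forall>i j. i \<noteq> j \<longrightarrow> A$i$j = 0" by (simp add: A_def)
  have Aii: "A$i$i = a i" for i by (simp add: A_def)
  have fsA: "fs A = 1 + q\<^sup>2"
  proof -
    have "fs A = (\<Sum>i\<in>UNIV. \<Sum>j\<in>UNIV. if j = i then (cmod (a i))\<^sup>2 else 0)"
      unfolding fs_def by (intro sum.cong refl) (auto simp: A_def)
    also have "\<dots> = (\<Sum>i\<in>UNIV. (cmod (a i))\<^sup>2)" by simp
    also have "\<dots> = (\<Sum>i\<in>{i0, j0}. (cmod (a i))\<^sup>2)"
      by (rule sum.mono_neutral_right) (auto simp: a_def)
    also have "\<dots> = 1 + q\<^sup>2" using ij q by (simp add: a_def)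
    finally show ?thesis .
  qed
  have fsB: "fs B = 1"
  proof -
    have pB: "(cmod (B$i$j))\<^sup>2 = (if i = i0 then (if j = j0 then 1 else 0) else 0)" for i j
      by (simp add: B_def)
    have "fs B = (\<Sum>i\<in>UNIV. if i = i0 then (\<Sum>j\<in>UNIV. if j = j0 then 1 else 0) else 0)"
      unfolding fs_def pB by (intro sum.cong refl) auto
    thus ?thesis by simp
  qed
  have fsC: "fs (A ** B - q *\<^sub>R (B ** A)) = (1 + q\<^sup>2)\<^sup>2"
  proof -
    have pC: "(cmod ((a i - q * a j) * B$i$j))\<^sup>2 =
      (if i = i0 then (if j = j0 then (cmod (a i0 - q * a j0))\<^sup>2 else 0) else 0)" for i j
      by (simp add: B_def)
    have "fs (A ** B - q *\<^sub>R (B ** A)) =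
      (\<Sum>i\<in>UNIV. if i = i0 then (\<Sum>j\<in>UNIV. if j = j0 then (cmod (a i0 - q * a j0))\<^sup>2 else 0) else 0)"
      unfolding fs_def diag_entry[OF diag] Aii pC by (intro sum.cong refl) auto
    also have "\<dots> = (cmod (1 + complex_of_real (q\<^sup>2)))\<^sup>2" using ij by (simp add: a_def power2_eq_square)
    also have "\<dots> = (1 + q\<^sup>2)\<^sup>2"
      by (metis abs_of_nonneg norm_of_real of_real_1 of_real_add real_norm_def zero_le_power2
          add_nonneg_nonneg zero_le_one)
    finally show ?thesis .
  qed
  have "A$i0$i0 \<noteq> (0::complex^'n^'n)$i0$i0" by (simp add: Aii a_def)
  hence "A \<noteq> 0" by metis
  moreover have "B$i0$j0 \<noteq> (0::complex^'n^'n)$i0$j0" by (simp add: B_def)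
  hence "B \<noteq> 0" by metis
  moreover have "normal_matrix A" by (rule diag_normal[OF diag])
  moreover have "(frob_norm (A ** B - q *\<^sub>R (B ** A)))\<^sup>2
              = (1 + q\<^sup>2) * (frob_norm A)\<^sup>2 * (frob_norm B)\<^sup>2"
    unfolding frob_sq fsA fsB fsC by (simp add: power2_eq_square)
  ultimately show ?thesis by blast
qed

theorem proposition2:
  fixes q :: real
  assumes "CARD('n::finite) \<ge> 2" and "q > 0"
  shows "(\<forall>A B :: complex^'n^'n. (normal_matrix A \<or> normal_matrix B) \<longrightarrow>
            (frob_norm (A ** B - q *\<^sub>R (B ** A)))\<^sup>2
              \<le> (1 + q\<^sup>2) * (frob_norm A)\<^sup>2 * (frob_norm B)\<^sup>2)
       \<and> (\<exists>A B :: complex^'n^'n. (normal_matrix A \<or> normal_matrix B) \<and>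
            A \<noteq> 0 \<and> B \<noteq> 0 \<and>
            (frob_norm (A ** B - q *\<^sub>R (B ** A)))\<^sup>2
              = (1 + q\<^sup>2) * (frob_norm A)\<^sup>2 * (frob_norm B)\<^sup>2)"
proof (intro conjI allI impI)
  fix A B :: "complex^'n^'n"
  assume "normal_matrix A \<or> normal_matrix B"
  thus "(frob_norm (A ** B - q *\<^sub>R (B ** A)))\<^sup>2
              \<le> (1 + q\<^sup>2) * (frob_norm A)\<^sup>2 * (frob_norm B)\<^sup>2"
    unfolding frob_sq by (rule main_ineq[OF _ assms(2)])
next
  show "\<exists>A B :: complex^'n^'n. (normal_matrix A \<or> normal_matrix B) \<and>
            A \<noteq> 0 \<and> B \<noteq> 0 \<and>
            (frob_norm (A ** B - q *\<^sub>R (B ** A)))\<^sup>2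
              = (1 + q\<^sup>2) * (frob_norm A)\<^sup>2 * (frob_norm B)\<^sup>2"
    by (rule attain[OF assms])
qed


end
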